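(* For any discrete memoryless channel $\mathcal W$ from a finite set $\mathcal X$ to a finite set $\mathcal Y$, $\lim_{\alpha\to1}U_\alpha(\mathcal W)=U(\mathcal W)$ (both one-sided limits exist and equal $U(\mathcal W)$).
   Context: $D(P\|Q)=\sum P\log(P/Q)$ ($0\log(0/q)=0$; $+\infty$ if $P\not\ll Q$); for $\alpha\in(0,1)\cup(1,\infty)$, $D_\alpha(P\|Q)=\frac1{\alpha-1}\log\sum_{x:P(x)>0}P(x)^\alpha Q(x)^{1-\alpha}$ ($+\infty$ if $\alpha>1$ and $P\not\ll Q$). With $P_{XY}(x,y)=P_X(x)\mathcal W(y|x)$: $U(\mathcal W)=\max_{P_X}\min_{Q_Y}D(P_X\times Q_Y\|P_{XY})$ and $U_\alpha(\mathcal W)=\max_{P_X}\min_{Q_Y}D_\alpha(P_X\times Q_Y\|P_{XY})$. *)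

theory Defs
  imports "HOL-Analysis.Analysis"
begin

definition is_dist :: "('a::finite \<Rightarrow> real) \<Rightarrow> bool" where
  "is_dist P \<longleftrightarrow> (\<forall>a. 0 \<le> P a) \<and> (\<Sum>a\<in>UNIV. P a) = 1"

text \<open>Discrete memoryless channel: a stochastic matrix W x y = W(y|x).\<close>
definition is_channel :: "('x::finite \<Rightarrow> 'y::finite \<Rightarrow> real) \<Rightarrow> bool" where
  "is_channel W \<longleftrightarrow> (\<forall>x. is_dist (W x))"

definition KL :: "('a::finite \<Rightarrow> real) \<Rightarrow> ('a \<Rightarrow> real) \<Rightarrow> ereal" where
  "KL P Q = (if (\<forall>a. P a > 0 \<longrightarrow> Q a > 0)
     then ereal (\<Sum>a\<in>UNIV. if P a = 0 then 0 else P a * ln (P a / Q a))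
     else \<infinity>)"

text \<open>Renyi divergence of order alpha (natural logarithm). For alpha < 1 a vanishing sum
  gives log 0 = -\<infinity>, hence the value +\<infinity>; for alpha > 1 the value is +\<infinity> unless P << Q.\<close>
definition renyi :: "real \<Rightarrow> ('a::finite \<Rightarrow> real) \<Rightarrow> ('a \<Rightarrow> real) \<Rightarrow> ereal" where
  "renyi \<alpha> P Q =
    (let s = (\<Sum>a\<in>{a. P a > 0}. P a powr \<alpha> * Q a powr (1 - \<alpha>)) in
     if \<alpha> < 1 then (if s = 0 then \<infinity> else ereal (ln s / (\<alpha> - 1)))
     else (if (\<forall>a. P a > 0 \<longrightarrow> Q a > 0) then ereal (ln s / (\<alpha> - 1)) else \<infinity>))"

definition joint :: "('x::finite \<Rightarrow> real) \<Rightarrow> ('x \<Rightarrow> 'y::finite \<Rightarrow> real) \<Rightarrow> ('x \<times> 'y \<Rightarrow> real)" where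
  "joint P W = (\<lambda>(x, y). P x * W x y)"

definition prod_dist :: "('x::finite \<Rightarrow> real) \<Rightarrow> ('y::finite \<Rightarrow> real) \<Rightarrow> ('x \<times> 'y \<Rightarrow> real)" where
  "prod_dist P Q = (\<lambda>(x, y). P x * Q y)"

definition U :: "('x::finite \<Rightarrow> 'y::finite \<Rightarrow> real) \<Rightarrow> ereal" where
  "U W = (SUP P\<in>{P. is_dist P}. INF Q\<in>{Q. is_dist Q}. KL (prod_dist P Q) (joint P W))"

definition U_renyi :: "real \<Rightarrow> ('x::finite \<Rightarrow> 'y::finite \<Rightarrow> real) \<Rightarrow> ereal" where
  "U_renyi \<alpha> W = (SUP P\<in>{P. is_dist P}. INF Q\<in>{Q. is_dist Q}. renyi \<alpha> (prod_dist P Q) (joint P W))"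

end

theory Submission
  imports Defs
begin


lemma exp_quad_bound:
  fixes t :: real assumes "\<bar>t\<bar> \<le> 1" shows "exp t \<le> 1 + t + t^2"
proof (cases "t \<ge> 0")
  case True thus ?thesis using exp_bound[of t] assms by auto
next
  case False
  define s where "s = -t"
  have s: "0 \<le> s" "s \<le> 1" using False assms by (auto simp: s_def)
  have e: "1 + s + s^2/2 \<le> exp s" using exp_lower_Taylor_quadratic[OF s(1)] .
  have "1 - s + s^2 = (s - 1/2)^2 + 3/4" by (simp add: power2_eq_square algebra_simps)
  hence pos: "0 < 1 - s + s^2" using zero_le_power2[of "s - 1/2"] by linarith
  have "1 \<le> (1 - s + s^2) * (1 + s + s^2/2)"
  proof -
    have "(1 - s + s^2) * (1 + s + s^2/2) = 1 + s^2/2 + s^3/2 + s^4/2"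
      by (simp add: field_simps power2_eq_square power3_eq_cube power4_eq_xxxx)
    thus ?thesis using s by simp
  qed
  also have "\<dots> \<le> (1 - s + s^2) * exp s" using e pos by (intro mult_left_mono) auto
  finally have "1 \<le> (1 - s + s^2) * exp s" .
  hence "exp (-s) \<le> 1 - s + s^2" by (simp add: exp_minus field_simps)
  thus ?thesis by (simp add: s_def)
qed

lemma jensen_ln:
  fixes w x :: "'a \<Rightarrow> real"
  assumes "finite I" "\<And>i. i \<in> I \<Longrightarrow> 0 \<le> w i" "sum w I = 1"
    "\<And>i. i \<in> I \<Longrightarrow> 0 < w i \<Longrightarrow> 0 < x i"
  shows "0 < (\<Sum>i\<in>I. w i * x i) \<and> (\<Sum>i\<in>I. w i * ln (x i)) \<le> ln (\<Sum>i\<in>I. w i * x i)"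
proof -
  define m where "m = (\<Sum>i\<in>I. w i * x i)"
  obtain i0 where i0: "i0 \<in> I" "w i0 > 0"
    using assms(2,3) by (metis less_eq_real_def sum_nonpos zero_less_one not_le)
  have nn: "\<And>i. i \<in> I \<Longrightarrow> 0 \<le> w i * x i"
    using assms(2,4) by (metis less_eq_real_def mult_eq_0_iff mult_pos_pos)
  have "w i0 * x i0 \<le> m" unfolding m_def
    using nn i0 assms(1) by (intro member_le_sum) auto
  moreover have "0 < w i0 * x i0" using i0 assms(4) by simp
  ultimately have m: "0 < m" by simp
  have "\<And>i. i \<in> I \<Longrightarrow> w i * ln (x i) - w i * ln m \<le> w i * x i / m - w i"
  proof -
    fix i assume i: "i \<in> I"
    show "w i * ln (x i) - w i * ln m \<le> w i * x i / m - w i"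
    proof (cases "w i = 0")
      case False
      hence wp: "w i > 0" using assms(2) i by force
      hence xp: "x i > 0" using assms(4) i by auto
      have "ln (x i / m) \<le> x i / m - 1" using xp m by (intro ln_le_minus_one) simp
      hence "w i * ln (x i / m) \<le> w i * (x i / m - 1)" using wp by (intro mult_left_mono) auto
      thus ?thesis using xp m by (simp add: ln_div algebra_simps)
    qed simp
  qed
  hence "(\<Sum>i\<in>I. w i * ln (x i) - w i * ln m) \<le> (\<Sum>i\<in>I. w i * x i / m - w i)"
    by (intro sum_mono) auto
  also have "\<dots> = 0" using m assms(3) by (simp add: sum_subtractf sum_divide_distrib[symmetric] m_def)
  finally have "(\<Sum>i\<in>I. w i * ln (x i)) \<le> ln m"
    by (simp add: sum_subtractf sum_distrib_right[symmetric] assms(3))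
  with m show ?thesis by (simp add: m_def)
qed



lemma dist_nonneg: "is_dist P \<Longrightarrow> 0 \<le> P a" unfolding is_dist_def by auto
lemma dist_sum: "is_dist P \<Longrightarrow> (\<Sum>a\<in>UNIV. P a) = 1" unfolding is_dist_def by auto
lemma dist_pos: assumes "is_dist (P::'a::finite\<Rightarrow>real)" shows "\<exists>a. P a > 0"
proof (rule ccontr)
  assume "\<not> ?thesis"
  hence "\<And>a. P a = 0" using dist_nonneg[OF assms] by (metis less_eq_real_def)
  thus False using dist_sum[OF assms] by simp
qed
lemma dist_le1: assumes "is_dist (P::'a::finite\<Rightarrow>real)" shows "P a \<le> 1"
proof -
  have "P a \<le> (\<Sum>a\<in>UNIV. P a)" using dist_nonneg[OF assms] by (intro member_le_sum) auto
  thus ?thesis using dist_sum[OF assms] by simp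
qed

lemma sum_pair: "(\<Sum>a\<in>(UNIV::('a::finite\<times>'b::finite) set). g a) = (\<Sum>x\<in>UNIV. \<Sum>y\<in>UNIV. g (x,y))"
  by (simp add: sum.cartesian_product flip: UNIV_Times_UNIV)

definition Yp :: "('x::finite \<Rightarrow> 'y::finite \<Rightarrow> real) \<Rightarrow> ('x \<Rightarrow> real) \<Rightarrow> 'y set" where
  "Yp W P = {y. \<forall>x. P x > 0 \<longrightarrow> W x y > 0}"
definition lg :: "('x::finite \<Rightarrow> 'y::finite \<Rightarrow> real) \<Rightarrow> ('x \<Rightarrow> real) \<Rightarrow> 'y \<Rightarrow> real" where
  "lg W P y = (\<Sum>x\<in>UNIV. P x * ln (W x y))"
definition S0 :: "('x::finite \<Rightarrow> 'y::finite \<Rightarrow> real) \<Rightarrow> ('x \<Rightarrow> real) \<Rightarrow> real" where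
  "S0 W P = (\<Sum>y\<in>Yp W P. exp (lg W P y))"
definition Qs :: "('x::finite \<Rightarrow> 'y::finite \<Rightarrow> real) \<Rightarrow> ('x \<Rightarrow> real) \<Rightarrow> 'y \<Rightarrow> real" where
  "Qs W P y = (if y \<in> Yp W P then exp (lg W P y) / S0 W P else 0)"
definition wmin :: "('x::finite \<Rightarrow> 'y::finite \<Rightarrow> real) \<Rightarrow> real" where
  "wmin W = Min {W x y | x y. W x y > 0}"

lemma ch_nonneg: "is_channel W \<Longrightarrow> 0 \<le> W x y"
  unfolding is_channel_def using dist_nonneg by blast
lemma ch_le1: "is_channel W \<Longrightarrow> W x y \<le> 1"
  unfolding is_channel_def using dist_le1 by blast
lemma ch_pos: "is_channel W \<Longrightarrow> \<exists>y. W x y > 0"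
  unfolding is_channel_def using dist_pos by blast

lemma wmin:
  assumes ch: "is_channel (W::'x::finite \<Rightarrow> 'y::finite \<Rightarrow> real)"
  shows "0 < wmin W" "wmin W \<le> 1" "\<And>x y. W x y > 0 \<Longrightarrow> wmin W \<le> W x y"
proof -
  define A where "A = {W x y | x y. W x y > 0}"
  have fin: "finite A" unfolding A_def
    by (rule finite_subset[of _ "range (case_prod W)"]) auto
  obtain x0 :: 'x where True by simp
  obtain y0 where "W x0 y0 > 0" using ch_pos[OF ch] by blast
  hence ne: "A \<noteq> {}" unfolding A_def by blast
  have "wmin W \<in> A" unfolding wmin_def A_def[symmetric] using fin ne by (rule Min_in)
  then obtain x1 y1 where 1: "wmin W = W x1 y1" "W x1 y1 > 0" unfolding A_def by blast
  thus "0 < wmin W" by simp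
  show "wmin W \<le> 1" using 1 ch_le1[OF ch] by simp
  show "\<And>x y. W x y > 0 \<Longrightarrow> wmin W \<le> W x y"
    unfolding wmin_def A_def[symmetric] using fin by (intro Min_le) (auto simp: A_def)
qed

lemma lg_bounds:
  assumes ch: "is_channel W" and P: "is_dist P" and y: "y \<in> Yp W P"
  shows "ln (wmin W) \<le> lg W P y" "lg W P y \<le> 0"
proof -
  have t: "P x * ln (wmin W) \<le> P x * ln (W x y) \<and> P x * ln (W x y) \<le> 0" for x
  proof (cases "P x > 0")
    case True
    hence W: "W x y > 0" using y by (auto simp: Yp_def)
    have "ln (wmin W) \<le> ln (W x y)" using wmin[OF ch] W by simp
    moreover have "ln (W x y) \<le> 0" using ch_le1[OF ch] W by simp
    ultimately show ?thesis using True by (simp add: mult_left_mono mult_nonneg_nonpos)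
  next
    case False hence "P x = 0" using dist_nonneg[OF P] by (metis less_eq_real_def)
    thus ?thesis by simp
  qed
  have "(\<Sum>x\<in>UNIV. P x * ln (wmin W)) \<le> lg W P y" unfolding lg_def by (rule sum_mono) (use t in blast)
  moreover have "(\<Sum>x\<in>UNIV. P x * ln (wmin W)) = (\<Sum>x\<in>UNIV. P x) * ln (wmin W)"
    by (rule sum_distrib_right[symmetric])
  ultimately show "ln (wmin W) \<le> lg W P y" using dist_sum[OF P] by simp
  show "lg W P y \<le> 0" unfolding lg_def by (rule sum_nonpos) (use t in blast)
qed

lemma S0_bounds:
  assumes ch: "is_channel (W::'x::finite \<Rightarrow> 'y::finite \<Rightarrow> real)" and P: "is_dist P" and ne: "Yp W P \<noteq> {}"
  shows "wmin W \<le> S0 W P" "S0 W P \<le> real CARD('y)"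
proof -
  obtain y0 where y0: "y0 \<in> Yp W P" using ne by blast
  have "exp (ln (wmin W)) \<le> exp (lg W P y0)" using lg_bounds(1)[OF ch P y0] by simp
  hence "wmin W \<le> exp (lg W P y0)" using wmin(1)[OF ch] by simp
  also have "\<dots> \<le> S0 W P" unfolding S0_def using y0 by (intro member_le_sum) auto
  finally show "wmin W \<le> S0 W P" .
  have "S0 W P \<le> (\<Sum>y\<in>Yp W P. 1)" unfolding S0_def using lg_bounds(2)[OF ch P] by (intro sum_mono) auto
  also have "\<dots> \<le> real CARD('y)" by (simp add: card_mono)
  finally show "S0 W P \<le> real CARD('y)" .
qed



lemma S0_alt: "S0 W P = (\<Sum>y\<in>UNIV. if y \<in> Yp W P then exp (lg W P y) else 0)"
  by (simp add: S0_def sum.If_cases)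

lemma KL_formula:
  fixes W :: "'x::finite \<Rightarrow> 'y::finite \<Rightarrow> real"
  assumes P: "is_dist P" and Q: "is_dist Q"
    and ac: "\<And>x y. P x > 0 \<Longrightarrow> Q y > 0 \<Longrightarrow> W x y > 0"
  shows "KL (prod_dist P Q) (joint P W) = ereal (\<Sum>y\<in>UNIV. Q y * (ln (Q y) - lg W P y))"
proof -
  have pos: "P x > 0 \<and> Q y > 0" if "P x * Q y \<noteq> 0" for x y
    using that dist_nonneg[OF P, of x] dist_nonneg[OF Q, of y] by (auto simp: less_eq_real_def)
  have c: "\<forall>a. prod_dist P Q a > 0 \<longrightarrow> joint P W a > 0"
  proof (intro allI impI)
    fix a assume "prod_dist P Q a > 0"
    then obtain x y where a: "a = (x,y)" "P x * Q y > 0" by (cases a) (auto simp: Defs.prod_dist_def)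
    hence "P x > 0" "Q y > 0" using dist_nonneg[OF P, of x] dist_nonneg[OF Q, of y] by (auto simp: zero_less_mult_iff)
    thus "joint P W a > 0" using ac a by (simp add: joint_def)
  qed
  have t: "(if P x * Q y = 0 then 0 else P x * Q y * ln (P x * Q y / (P x * W x y))) = P x * Q y * (ln (Q y) - ln (W x y))" for x y
  proof (cases "P x * Q y = 0")
    case False
    hence pq: "P x > 0" "Q y > 0" using pos by auto
    hence w: "W x y > 0" using ac by auto
    have "P x * Q y / (P x * W x y) = Q y / W x y" using pq by simp
    hence "ln (P x * Q y / (P x * W x y)) = ln (Q y) - ln (W x y)" using pq w by (simp add: ln_div)
    thus ?thesis using False by simp
  qed simp
  have "(\<Sum>a\<in>UNIV. if prod_dist P Q a = 0 then 0 else prod_dist P Q a * ln (prod_dist P Q a / joint P W a))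
      = (\<Sum>x\<in>UNIV. \<Sum>y\<in>UNIV. P x * Q y * (ln (Q y) - ln (W x y)))"
    unfolding sum_pair
  proof (intro sum.cong refl)
    fix x y
    show "(if prod_dist P Q (x, y) = 0 then 0 else prod_dist P Q (x, y) * ln (prod_dist P Q (x, y) / joint P W (x, y))) =
      P x * Q y * (ln (Q y) - ln (W x y))"
      unfolding Defs.prod_dist_def joint_def prod.case by (rule t)
  qed
  also have "\<dots> = (\<Sum>y\<in>UNIV. \<Sum>x\<in>UNIV. P x * Q y * (ln (Q y) - ln (W x y)))" by (rule sum.swap)
  also have "\<dots> = (\<Sum>y\<in>UNIV. Q y * (ln (Q y) - lg W P y))"
  proof (rule sum.cong[OF refl])
    fix y
    have "(\<Sum>x\<in>UNIV. P x * Q y * (ln (Q y) - ln (W x y))) = (\<Sum>x\<in>UNIV. Q y * ln (Q y) * P x - Q y * (P x * ln (W x y)))"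
      by (rule sum.cong) (auto simp: algebra_simps)
    also have "\<dots> = Q y * ln (Q y) * (\<Sum>x\<in>UNIV. P x) - Q y * (\<Sum>x\<in>UNIV. P x * ln (W x y))"
      by (simp add: sum_subtractf sum_distrib_left)
    finally show "(\<Sum>x\<in>UNIV. P x * Q y * (ln (Q y) - ln (W x y))) = Q y * (ln (Q y) - lg W P y)"
      using dist_sum[OF P] by (simp add: lg_def algebra_simps)
  qed
  finally show ?thesis unfolding KL_def using c by simp
qed

lemma KL_infty:
  fixes W :: "'x::finite \<Rightarrow> 'y::finite \<Rightarrow> real"
  assumes ch: "is_channel W" and P: "is_dist P" and Q: "is_dist Q" and e: "Yp W P = {}"
  shows "KL (prod_dist P Q) (joint P W) = \<infinity>"
proof -
  obtain y where y: "Q y > 0" using dist_pos[OF Q] by blast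
  then obtain x where x: "P x > 0" "\<not> W x y > 0" using e by (auto simp: Yp_def)
  hence "W x y = 0" using ch_nonneg[OF ch, of x y] by simp
  hence "0 < prod_dist P Q (x,y)" "\<not> 0 < joint P W (x,y)" using x y by (auto simp: Defs.prod_dist_def joint_def)
  hence "\<not> (\<forall>a. prod_dist P Q a > 0 \<longrightarrow> joint P W a > 0)" by blast
  thus ?thesis unfolding KL_def by simp
qed

lemma KL_lower:
  fixes W :: "'x::finite \<Rightarrow> 'y::finite \<Rightarrow> real"
  assumes ch: "is_channel W" and P: "is_dist P" and Q: "is_dist Q" and ne: "Yp W P \<noteq> {}"
  shows "ereal (- ln (S0 W P)) \<le> KL (prod_dist P Q) (joint P W)"
proof (cases "\<forall>x y. P x > 0 \<longrightarrow> Q y > 0 \<longrightarrow> W x y > 0")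
  case False
  then obtain x y where x: "P x > 0" "Q y > 0" "\<not> W x y > 0" by blast
  hence "W x y = 0" using ch_nonneg[OF ch, of x y] by simp
  hence "0 < prod_dist P Q (x,y)" "\<not> 0 < joint P W (x,y)" using x by (auto simp: Defs.prod_dist_def joint_def)
  hence "\<not> (\<forall>a. prod_dist P Q a > 0 \<longrightarrow> joint P W a > 0)" by blast
  hence "KL (prod_dist P Q) (joint P W) = \<infinity>" unfolding KL_def by simp
  thus ?thesis by simp
next
  case True
  hence ac: "\<And>x y. P x > 0 \<Longrightarrow> Q y > 0 \<Longrightarrow> W x y > 0" by blast
  have QY: "Q y > 0 \<Longrightarrow> y \<in> Yp W P" for y using ac by (auto simp: Yp_def)
  define m where "m = (\<Sum>y\<in>UNIV. Q y * (exp (lg W P y) / Q y))"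
  have J: "0 < m \<and> (\<Sum>y\<in>UNIV. Q y * ln (exp (lg W P y) / Q y)) \<le> ln m"
    unfolding m_def using dist_nonneg[OF Q] dist_sum[OF Q]
    by (intro jensen_ln) auto
  have "m \<le> S0 W P" unfolding m_def S0_alt
  proof (rule sum_mono)
    fix y
    show "Q y * (exp (lg W P y) / Q y) \<le> (if y \<in> Yp W P then exp (lg W P y) else 0)"
    proof (cases "Q y = 0")
      case False
      hence "Q y > 0" using dist_nonneg[OF Q, of y] by simp
      thus ?thesis using QY by simp
    qed simp
  qed
  hence lnm: "ln m \<le> ln (S0 W P)" using J by simp
  have "(\<Sum>y\<in>UNIV. Q y * (ln (Q y) - lg W P y)) = - (\<Sum>y\<in>UNIV. Q y * ln (exp (lg W P y) / Q y))"
    unfolding sum_negf[symmetric]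
  proof (rule sum.cong[OF refl])
    fix y show "Q y * (ln (Q y) - lg W P y) = - (Q y * ln (exp (lg W P y) / Q y))"
    proof (cases "Q y = 0")
      case False
      hence "Q y > 0" using dist_nonneg[OF Q, of y] by simp
      thus ?thesis by (simp add: ln_div algebra_simps)
    qed simp
  qed
  hence "- ln (S0 W P) \<le> (\<Sum>y\<in>UNIV. Q y * (ln (Q y) - lg W P y))" using J lnm by linarith
  thus ?thesis using KL_formula[OF P Q ac] by simp
qed

lemma Qs_dist:
  assumes ch: "is_channel W" and P: "is_dist P" and ne: "Yp W P \<noteq> {}"
  shows "is_dist (Qs W P)"
proof -
  have S: "S0 W P > 0" using S0_bounds(1)[OF ch P ne] wmin(1)[OF ch] by simp
  have "(\<Sum>y\<in>UNIV. Qs W P y) = (\<Sum>y\<in>UNIV. (if y \<in> Yp W P then exp (lg W P y) else 0) / S0 W P)"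
    unfolding Qs_def by (rule sum.cong) auto
  also have "\<dots> = 1" using S by (simp add: sum_divide_distrib[symmetric] S0_alt[symmetric])
  finally show ?thesis unfolding is_dist_def using S by (auto simp: Qs_def)
qed

lemma KL_Qs:
  fixes W :: "'x::finite \<Rightarrow> 'y::finite \<Rightarrow> real"
  assumes ch: "is_channel W" and P: "is_dist P" and ne: "Yp W P \<noteq> {}"
  shows "KL (prod_dist P (Qs W P)) (joint P W) = ereal (- ln (S0 W P))"
proof -
  have S: "S0 W P > 0" using S0_bounds(1)[OF ch P ne] wmin(1)[OF ch] by simp
  have ac: "\<And>x y. P x > 0 \<Longrightarrow> Qs W P y > 0 \<Longrightarrow> W x y > 0"
    by (auto simp: Qs_def Yp_def split: if_splits)
  have "(\<Sum>y\<in>UNIV. Qs W P y * (ln (Qs W P y) - lg W P y)) = (\<Sum>y\<in>UNIV. Qs W P y * (- ln (S0 W P)))"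
  proof (rule sum.cong[OF refl])
    fix y show "Qs W P y * (ln (Qs W P y) - lg W P y) = Qs W P y * (- ln (S0 W P))"
      using S by (auto simp: Qs_def ln_div)
  qed
  also have "\<dots> = (\<Sum>y\<in>UNIV. Qs W P y) * (- ln (S0 W P))" by (rule sum_distrib_right[symmetric])
  also have "\<dots> = - ln (S0 W P)" using dist_sum[OF Qs_dist[OF ch P ne]] by simp
  finally show ?thesis using KL_formula[OF P Qs_dist[OF ch P ne] ac] by simp
qed

definition fP :: "('x::finite \<Rightarrow> 'y::finite \<Rightarrow> real) \<Rightarrow> ('x \<Rightarrow> real) \<Rightarrow> ereal" where
  "fP W P = (INF Q\<in>{Q. is_dist Q}. KL (prod_dist P Q) (joint P W))"

lemma fP_val:
  assumes ch: "is_channel W" and P: "is_dist P"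
  shows "fP W P = (if Yp W P = {} then \<infinity> else ereal (- ln (S0 W P)))"
proof (cases "Yp W P = {}")
  case True
  thus ?thesis unfolding fP_def using KL_infty[OF ch P _ True] True by (auto intro!: antisym INF_greatest)
next
  case False
  have "fP W P \<le> ereal (- ln (S0 W P))" unfolding fP_def
    using KL_Qs[OF ch P False] Qs_dist[OF ch P False] by (metis INF_lower mem_Collect_eq)
  moreover have "ereal (- ln (S0 W P)) \<le> fP W P" unfolding fP_def
    using KL_lower[OF ch P _ False] by (auto intro: INF_greatest)
  ultimately show ?thesis using False by simp
qed



lemma renyi_sum_univ:
  fixes p q :: "'a::finite \<Rightarrow> real"
  assumes "\<And>a. 0 \<le> p a"
  shows "(\<Sum>a\<in>{a. p a > 0}. p a powr \<alpha> * q a powr (1 - \<alpha>)) = (\<Sum>a\<in>UNIV. p a powr \<alpha> * q a powr (1 - \<alpha>))"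
proof (rule sum.mono_neutral_left)
  show "\<forall>i\<in>UNIV - {a. p a > 0}. p i powr \<alpha> * q i powr (1 - \<alpha>) = 0"
  proof
    fix i assume "i \<in> UNIV - {a. p a > 0}"
    hence "p i = 0" using assms[of i] by simp
    thus "p i powr \<alpha> * q i powr (1 - \<alpha>) = 0" by simp
  qed
qed auto

lemma renyi_core:
  fixes p q :: "'a::finite \<Rightarrow> real" and \<alpha> :: real
  assumes p: "is_dist p" and ac: "\<And>a. p a > 0 \<Longrightarrow> q a > 0"
  defines "s \<equiv> (\<Sum>a\<in>{a. p a > 0}. p a powr \<alpha> * q a powr (1 - \<alpha>))"
    and "K \<equiv> (\<Sum>a\<in>UNIV. if p a = 0 then 0 else p a * ln (p a / q a))"
  shows "0 < s \<and> (\<alpha> - 1) * K \<le> ln s"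
proof -
  define x where "x a = exp ((1 - \<alpha>) * ln (q a / p a))" for a
  have J: "0 < (\<Sum>a\<in>UNIV. p a * x a) \<and> (\<Sum>a\<in>UNIV. p a * ln (x a)) \<le> ln (\<Sum>a\<in>UNIV. p a * x a)"
    using dist_nonneg[OF p] dist_sum[OF p] by (intro jensen_ln) (auto simp: x_def)
  have "s = (\<Sum>a\<in>UNIV. p a powr \<alpha> * q a powr (1 - \<alpha>))"
    unfolding s_def using dist_nonneg[OF p] by (rule renyi_sum_univ)
  also have "\<dots> = (\<Sum>a\<in>UNIV. p a * x a)"
  proof (rule sum.cong[OF refl])
    fix a show "p a powr \<alpha> * q a powr (1 - \<alpha>) = p a * x a"
    proof (cases "p a = 0")
      case False
      hence pa: "p a > 0" using dist_nonneg[OF p, of a] by simp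
      hence qa: "q a > 0" using ac by simp
      have "p a * x a = exp (ln (p a)) * exp ((1 - \<alpha>) * (ln (q a) - ln (p a)))"
        using pa qa by (simp add: x_def ln_div)
      also have "\<dots> = exp (\<alpha> * ln (p a)) * exp ((1 - \<alpha>) * ln (q a))"
        by (simp add: exp_add[symmetric] algebra_simps)
      also have "\<dots> = p a powr \<alpha> * q a powr (1 - \<alpha>)" using pa qa by (simp add: powr_def)
      finally show ?thesis by simp
    qed simp
  qed
  finally have s: "s = (\<Sum>a\<in>UNIV. p a * x a)" .
  have "(\<Sum>a\<in>UNIV. p a * ln (x a)) = (\<alpha> - 1) * K" unfolding K_def sum_distrib_left
  proof (rule sum.cong[OF refl])
    fix a show "p a * ln (x a) = (\<alpha> - 1) * (if p a = 0 then 0 else p a * ln (p a / q a))"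
    proof (cases "p a = 0")
      case False
      hence pa: "p a > 0" using dist_nonneg[OF p, of a] by simp
      hence qa: "q a > 0" using ac by simp
      show ?thesis using pa qa False by (simp add: x_def ln_div algebra_simps)
    qed simp
  qed
  thus ?thesis using J s by simp
qed

lemma renyi_le_KL:
  fixes p q :: "'a::finite \<Rightarrow> real"
  assumes p: "is_dist p" and a: "\<alpha> < 1"
  shows "renyi \<alpha> p q \<le> KL p q"
proof (cases "\<forall>a. p a > 0 \<longrightarrow> q a > 0")
  case True
  define s where "s = (\<Sum>a\<in>{a. p a > 0}. p a powr \<alpha> * q a powr (1 - \<alpha>))"
  define K where "K = (\<Sum>a\<in>UNIV. if p a = 0 then 0 else p a * ln (p a / q a))"
  have c: "0 < s \<and> (\<alpha> - 1) * K \<le> ln s" unfolding s_def K_def using True by (intro renyi_core[OF p]) auto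
  hence "ln s / (\<alpha> - 1) \<le> K" using a by (simp add: neg_divide_le_eq mult.commute)
  moreover have "renyi \<alpha> p q = ereal (ln s / (\<alpha> - 1))" using c a unfolding renyi_def Let_def s_def by simp
  moreover have "KL p q = ereal K" using True unfolding KL_def K_def by simp
  ultimately show ?thesis by simp
next
  case False thus ?thesis unfolding KL_def by auto
qed

lemma KL_le_renyi:
  fixes p q :: "'a::finite \<Rightarrow> real"
  assumes p: "is_dist p" and a: "\<alpha> > 1"
  shows "KL p q \<le> renyi \<alpha> p q"
proof (cases "\<forall>a. p a > 0 \<longrightarrow> q a > 0")
  case True
  define s where "s = (\<Sum>a\<in>{a. p a > 0}. p a powr \<alpha> * q a powr (1 - \<alpha>))"
  define K where "K = (\<Sum>a\<in>UNIV. if p a = 0 then 0 else p a * ln (p a / q a))"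
  have c: "0 < s \<and> (\<alpha> - 1) * K \<le> ln s" unfolding s_def K_def using True by (intro renyi_core[OF p]) auto
  hence "K \<le> ln s / (\<alpha> - 1)" using a by (simp add: pos_le_divide_eq mult.commute)
  moreover have "renyi \<alpha> p q = ereal (ln s / (\<alpha> - 1))" using True a unfolding renyi_def Let_def s_def by simp
  moreover have "KL p q = ereal K" using True unfolding KL_def K_def by simp
  ultimately show ?thesis by simp
next
  case False thus ?thesis using a unfolding renyi_def Let_def by auto
qed

lemma prod_dist_is_dist:
  assumes P: "is_dist P" and Q: "is_dist Q"
  shows "is_dist (prod_dist P Q)"
proof -
  have "(\<Sum>a\<in>UNIV. prod_dist P Q a) = (\<Sum>x\<in>UNIV. \<Sum>y\<in>UNIV. P x * Q y)"
    unfolding sum_pair Defs.prod_dist_def by simp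
  also have "\<dots> = 1" using dist_sum[OF P] dist_sum[OF Q] by (simp add: sum_distrib_left[symmetric] sum_distrib_right[symmetric])
  finally show ?thesis unfolding is_dist_def using dist_nonneg[OF P] dist_nonneg[OF Q]
    by (auto simp: Defs.prod_dist_def)
qed

lemma U_renyi_le_U:
  assumes a: "\<alpha> < 1"
  shows "U_renyi \<alpha> W \<le> U W"
  unfolding U_renyi_def U_def
  by (intro SUP_subset_mono INF_superset_mono order.refl renyi_le_KL[OF prod_dist_is_dist a]) auto

lemma U_le_U_renyi:
  assumes a: "\<alpha> > 1"
  shows "U W \<le> U_renyi \<alpha> W"
  unfolding U_renyi_def U_def
  by (intro SUP_subset_mono INF_superset_mono order.refl KL_le_renyi[OF prod_dist_is_dist a]) auto



definition A :: "('x::finite \<Rightarrow> 'y::finite \<Rightarrow> real) \<Rightarrow> ('x \<Rightarrow> real) \<Rightarrow> real \<Rightarrow> 'y \<Rightarrow> real" where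
  "A W P b y = (\<Sum>x\<in>UNIV. P x * W x y powr b)"
definition TT :: "('x::finite \<Rightarrow> 'y::finite \<Rightarrow> real) \<Rightarrow> ('x \<Rightarrow> real) \<Rightarrow> real \<Rightarrow> real" where
  "TT W P b = (\<Sum>y\<in>UNIV. A W P b y powr (1/b))"

lemma A_nonneg: "is_dist P \<Longrightarrow> 0 \<le> A W P b y"
  unfolding A_def using dist_nonneg by (intro sum_nonneg) (simp add: dist_nonneg)

lemma renyi_channel_sum:
  fixes W :: "'x::finite \<Rightarrow> 'y::finite \<Rightarrow> real"
  assumes P: "is_dist P" and Q: "is_dist Q"
  shows "(\<Sum>a\<in>{a. prod_dist P Q a > 0}. prod_dist P Q a powr \<alpha> * joint P W a powr (1 - \<alpha>))
     = (\<Sum>y\<in>UNIV. Q y powr \<alpha> * A W P (1 - \<alpha>) y)"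
proof -
  have "(\<Sum>a\<in>{a. prod_dist P Q a > 0}. prod_dist P Q a powr \<alpha> * joint P W a powr (1 - \<alpha>))
     = (\<Sum>a\<in>UNIV. prod_dist P Q a powr \<alpha> * joint P W a powr (1 - \<alpha>))"
    by (rule renyi_sum_univ) (use dist_nonneg[OF prod_dist_is_dist[OF P Q]] in auto)
  also have "\<dots> = (\<Sum>x\<in>UNIV. \<Sum>y\<in>UNIV. P x * (Q y powr \<alpha> * W x y powr (1 - \<alpha>)))"
    unfolding sum_pair
  proof (intro sum.cong refl)
    fix x y
    show "prod_dist P Q (x, y) powr \<alpha> * joint P W (x, y) powr (1 - \<alpha>) = P x * (Q y powr \<alpha> * W x y powr (1 - \<alpha>))"
    proof (cases "P x = 0")
      case False
      hence px: "P x > 0" using dist_nonneg[OF P, of x] by simp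
      have "P x powr \<alpha> * P x powr (1 - \<alpha>) = P x"
        using px by (simp add: powr_add[symmetric])
      thus ?thesis unfolding Defs.prod_dist_def joint_def prod.case powr_mult
        by (metis (no_types, lifting) mult.assoc mult.left_commute)
    qed (simp add: Defs.prod_dist_def joint_def)
  qed
  also have "\<dots> = (\<Sum>y\<in>UNIV. \<Sum>x\<in>UNIV. P x * (Q y powr \<alpha> * W x y powr (1 - \<alpha>)))" by (rule sum.swap)
  also have "\<dots> = (\<Sum>y\<in>UNIV. Q y powr \<alpha> * A W P (1 - \<alpha>) y)"
    unfolding A_def sum_distrib_left by (intro sum.cong refl) (simp add: algebra_simps)
  finally show ?thesis .
qed

lemma young0:
  fixes x y b :: real
  assumes "0 \<le> x" "0 \<le> y" "0 < b" "b < 1"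
  shows "x powr (1 - b) * y powr b \<le> (1 - b) * x + b * y"
proof (cases "x = 0 \<or> y = 0")
  case True thus ?thesis using assms by auto
next
  case False thus ?thesis using assms Youngs_inequality_0[of "1 - b" b x y] by auto
qed

lemma TT_pos:
  assumes ch: "is_channel W" and P: "is_dist P" and b: "0 < b"
  shows "0 < TT W P b"
proof -
  obtain x0 where x0: "P x0 > 0" using dist_pos[OF P] by blast
  obtain y0 where y0: "W x0 y0 > 0" using ch_pos[OF ch] by blast
  have "0 < P x0 * W x0 y0 powr b" using x0 y0 by simp
  also have "\<dots> \<le> A W P b y0" unfolding A_def
    by (rule member_le_sum) (auto simp: dist_nonneg[OF P])
  finally have "0 < A W P b y0 powr (1/b)" by simp
  also have "\<dots> \<le> TT W P b" unfolding TT_def by (rule member_le_sum) auto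
  finally show ?thesis .
qed

lemma s_le_TT:
  fixes W :: "'x::finite \<Rightarrow> 'y::finite \<Rightarrow> real"
  assumes ch: "is_channel W" and P: "is_dist P" and Q: "is_dist Q" and b: "0 < b" "b < 1"
  shows "(\<Sum>y\<in>UNIV. Q y powr (1 - b) * A W P b y) \<le> TT W P b powr b"
proof -
  define T where "T = TT W P b"
  have T: "0 < T" unfolding T_def by (rule TT_pos[OF ch P b(1)])
  define a where "a y = A W P b y powr (1/b)" for y
  have a0: "0 \<le> a y" for y unfolding a_def by simp
  have Aa: "A W P b y = a y powr b" for y
    unfolding a_def powr_powr using b A_nonneg[OF P, of W b y] by (simp add: abs_of_nonneg)
  have "Q y powr (1 - b) * A W P b y \<le> T powr b * ((1 - b) * Q y + b * (a y / T))" for y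
  proof -
    have "Q y powr (1 - b) * A W P b y = T powr b * (Q y powr (1 - b) * (a y / T) powr b)"
      unfolding Aa powr_divide using T by simp
    also have "\<dots> \<le> T powr b * ((1 - b) * Q y + b * (a y / T))"
      using young0[of "Q y" "a y / T" b] dist_nonneg[OF Q, of y] a0[of y] T b
      by (intro mult_left_mono) auto
    finally show ?thesis .
  qed
  hence "(\<Sum>y\<in>UNIV. Q y powr (1 - b) * A W P b y) \<le> (\<Sum>y\<in>UNIV. T powr b * ((1 - b) * Q y + b * (a y / T)))"
    by (intro sum_mono) auto
  also have "\<dots> = T powr b * ((1 - b) * (\<Sum>y\<in>UNIV. Q y) + b * ((\<Sum>y\<in>UNIV. a y) / T))"
  proof -
    have e1: "(\<Sum>y\<in>UNIV. T powr b * ((1 - b) * Q y + b * (a y / T))) = T powr b * (\<Sum>y\<in>UNIV. (1 - b) * Q y + b * (a y / T))"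
      by (rule sum_distrib_left[symmetric])
    have e2: "(\<Sum>y\<in>UNIV. (1 - b) * Q y + b * (a y / T)) = (\<Sum>y\<in>UNIV. (1 - b) * Q y) + (\<Sum>y\<in>UNIV. b * (a y / T))"
      by (rule sum.distrib)
    have e3: "(\<Sum>y\<in>UNIV. (1 - b) * Q y) = (1 - b) * (\<Sum>y\<in>UNIV. Q y)" by (rule sum_distrib_left[symmetric])
    have e4: "(\<Sum>y\<in>UNIV. b * (a y / T)) = b * (\<Sum>y\<in>UNIV. a y / T)" by (rule sum_distrib_left[symmetric])
    have e5: "(\<Sum>y\<in>UNIV. a y / T) = (\<Sum>y\<in>UNIV. a y) / T" by (rule sum_divide_distrib[symmetric])
    show ?thesis unfolding e1 e2 e3 e4 e5 ..
  qed
  also have "(\<Sum>y\<in>UNIV. a y) = T" unfolding a_def T_def TT_def ..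
  finally show ?thesis using T dist_sum[OF Q] by (simp add: T_def)
qed

lemma renyi_lower_left:
  fixes W :: "'x::finite \<Rightarrow> 'y::finite \<Rightarrow> real"
  assumes ch: "is_channel W" and P: "is_dist P" and Q: "is_dist Q" and a: "0 < \<alpha>" "\<alpha> < 1"
  shows "ereal (- ln (TT W P (1 - \<alpha>))) \<le> renyi \<alpha> (prod_dist P Q) (joint P W)"
proof -
  define b where "b = 1 - \<alpha>"
  have b: "0 < b" "b < 1" using a by (auto simp: b_def)
  define s where "s = (\<Sum>a\<in>{a. prod_dist P Q a > 0}. prod_dist P Q a powr \<alpha> * joint P W a powr (1 - \<alpha>))"
  have s: "s = (\<Sum>y\<in>UNIV. Q y powr (1 - b) * A W P b y)"
    unfolding s_def renyi_channel_sum[OF P Q] b_def by simp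
  have sT: "s \<le> TT W P b powr b" unfolding s by (rule s_le_TT[OF ch P Q b])
  have s0: "0 \<le> s" unfolding s by (intro sum_nonneg mult_nonneg_nonneg) (simp_all add: A_nonneg[OF P])
  have T: "0 < TT W P b" by (rule TT_pos[OF ch P b(1)])
  show ?thesis
  proof (cases "s = 0")
    case True thus ?thesis using a unfolding renyi_def Let_def s_def by simp
  next
    case False
    hence sp: "0 < s" using s0 by simp
    have "ln s \<le> ln (TT W P b powr b)" by (rule iffD2[OF ln_le_cancel_iff]) (use sp sT T in auto)
    also have "\<dots> = b * ln (TT W P b)" by simp
    finally have "ln s \<le> (- ln (TT W P b)) * (\<alpha> - 1)" by (simp add: b_def algebra_simps)
    hence "- ln (TT W P b) \<le> ln s / (\<alpha> - 1)" using a by (simp add: neg_le_divide_eq)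
    moreover have "renyi \<alpha> (prod_dist P Q) (joint P W) = ereal (ln s / (\<alpha> - 1))"
      using a False unfolding renyi_def Let_def s_def by simp
    ultimately show ?thesis by (simp add: b_def)
  qed
qed



definition cc :: "('x::finite \<Rightarrow> 'y::finite \<Rightarrow> real) \<Rightarrow> ('x \<Rightarrow> real) \<Rightarrow> 'y \<Rightarrow> real" where
  "cc W P y = (\<Sum>x\<in>UNIV. if W x y > 0 then P x else 0)"
definition kk :: "('x::finite \<Rightarrow> 'y::finite \<Rightarrow> real) \<Rightarrow> ('x \<Rightarrow> real) \<Rightarrow> 'y \<Rightarrow> real" where
  "kk W P y = (if cc W P y = 0 then 0 else 1 / (- ln (cc W P y)))"
definition KP :: "('x::finite \<Rightarrow> 'y::finite \<Rightarrow> real) \<Rightarrow> ('x \<Rightarrow> real) \<Rightarrow> real" where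
  "KP W P = (\<Sum>y\<in>UNIV. if y \<in> Yp W P then 0 else kk W P y)"
definition LL :: "('x::finite \<Rightarrow> 'y::finite \<Rightarrow> real) \<Rightarrow> real" where
  "LL W = - ln (wmin W)"

lemma LL_nonneg: "is_channel W \<Longrightarrow> 0 \<le> LL W"
  unfolding LL_def using wmin[of W] by simp

lemma lnW_bounds:
  assumes ch: "is_channel W" and w: "W x y > 0"
  shows "- LL W \<le> ln (W x y)" "ln (W x y) \<le> 0"
proof -
  have "ln (wmin W) \<le> ln (W x y)" using wmin[OF ch] w by simp
  thus "- LL W \<le> ln (W x y)" unfolding LL_def by simp
  show "ln (W x y) \<le> 0" using ch_le1[OF ch] w by simp
qed

lemma cc_bounds:
  assumes ch: "is_channel W" and P: "is_dist P" and y: "y \<notin> Yp W P"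
  shows "0 \<le> cc W P y" "cc W P y < 1"
proof -
  show "0 \<le> cc W P y" unfolding cc_def using dist_nonneg[OF P] by (intro sum_nonneg) auto
  obtain x0 where x0: "P x0 > 0" "\<not> W x0 y > 0" using y by (auto simp: Yp_def)
  have "cc W P y \<le> (\<Sum>x\<in>UNIV. if x = x0 then 0 else P x)" unfolding cc_def
    using x0 dist_nonneg[OF P] by (intro sum_mono) auto
  moreover have "(\<Sum>x\<in>UNIV. P x) = (\<Sum>x\<in>UNIV. (if x = x0 then 0 else P x) + (if x = x0 then P x else 0))"
    by (rule sum.cong) auto
  hence "(\<Sum>x\<in>UNIV. P x) = (\<Sum>x\<in>UNIV. if x = x0 then 0 else P x) + P x0"
    by (simp add: sum.distrib)
  ultimately show "cc W P y < 1" using dist_sum[OF P] x0 by linarith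
qed

lemma pow_small:
  fixes c b :: real
  assumes c: "0 \<le> c" "c < 1" and b: "0 < b"
  shows "c powr (1/b) \<le> b * (if c = 0 then 0 else 1 / (- ln c))"
proof (cases "c = 0")
  case False
  hence cp: "0 < c" using c by simp
  define k where "k = - ln c"
  have k: "0 < k" using cp c by (simp add: k_def)
  have kb: "0 < k / b" using k b by simp
  have e: "k / b \<le> exp (k / b)" using exp_ge_add_one_self[of "k/b"] by linarith
  have "c powr (1/b) = exp (- (k / b))" using cp by (simp add: powr_def k_def)
  also have "\<dots> = 1 / exp (k / b)" by (simp add: exp_minus inverse_eq_divide)
  also have "\<dots> \<le> 1 / (k / b)" by (rule divide_left_mono[OF e]) (simp, rule mult_pos_pos, use kb in auto)
  also have "\<dots> = b * (1 / k)" by simp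
  finally show ?thesis using False by (simp add: k_def)
qed simp

lemma A_Yp_bound:
  fixes W :: "'x::finite \<Rightarrow> 'y::finite \<Rightarrow> real"
  assumes ch: "is_channel W" and P: "is_dist P" and y: "y \<in> Yp W P"
    and b: "0 < b" "b * LL W \<le> 1"
  shows "A W P b y powr (1/b) \<le> exp (b * LL W ^ 2) * exp (lg W P y)"
proof -
  define L where "L = LL W"
  have L0: "0 \<le> L" using LL_nonneg[OF ch] by (simp add: L_def)
  have t: "P x * W x y powr b \<le> P x * (1 + b * ln (W x y) + b^2 * L^2)" for x
  proof (cases "P x = 0")
    case False
    hence px: "P x > 0" using dist_nonneg[OF P, of x] by simp
    hence w: "W x y > 0" using y by (auto simp: Yp_def)
    have lb: "- L \<le> ln (W x y)" "ln (W x y) \<le> 0" using lnW_bounds[OF ch w] by (auto simp: L_def)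
    have "b * (- ln (W x y)) \<le> b * L" using lb b by (intro mult_left_mono) auto
    moreover have "\<bar>b * ln (W x y)\<bar> = b * (- ln (W x y))" using lb b by (simp add: abs_mult abs_of_nonpos)
    ultimately have abs1: "\<bar>b * ln (W x y)\<bar> \<le> b * L" by simp
    hence abs2: "\<bar>b * ln (W x y)\<bar> \<le> 1" using b by (simp add: L_def)
    have sq: "(b * ln (W x y))^2 \<le> (b * L)^2"
      using abs1 L0 b abs_le_square_iff[of "b * ln (W x y)" "b * L"] by simp
    have "W x y powr b = exp (b * ln (W x y))" using w by (simp add: powr_def)
    also have "\<dots> \<le> 1 + b * ln (W x y) + (b * ln (W x y))^2" by (rule exp_quad_bound[OF abs2])
    also have "\<dots> \<le> 1 + b * ln (W x y) + b^2 * L^2" using sq by (simp add: power_mult_distrib)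
    finally show ?thesis using px by (intro mult_left_mono) auto
  qed simp
  have "A W P b y \<le> (\<Sum>x\<in>UNIV. P x * (1 + b * ln (W x y) + b^2 * L^2))"
    unfolding A_def by (intro sum_mono t)
  also have "\<dots> = (\<Sum>x\<in>UNIV. P x * (1 + b^2 * L^2) + b * (P x * ln (W x y)))"
    by (intro sum.cong refl) (simp add: algebra_simps)
  also have "\<dots> = (\<Sum>x\<in>UNIV. P x) * (1 + b^2 * L^2) + b * lg W P y"
    unfolding sum.distrib lg_def sum_distrib_left[symmetric] sum_distrib_right[symmetric] ..
  finally have Aub: "A W P b y \<le> 1 + b^2 * L^2 + b * lg W P y" using dist_sum[OF P] by simp
  obtain x0 where x0: "P x0 > 0" using dist_pos[OF P] by blast
  hence "W x0 y > 0" using y by (auto simp: Yp_def)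
  hence "0 < P x0 * W x0 y powr b" using x0 by simp
  also have "\<dots> \<le> A W P b y" unfolding A_def by (rule member_le_sum) (auto simp: dist_nonneg[OF P])
  finally have Ap: "0 < A W P b y" .
  have "ln (A W P b y) \<le> A W P b y - 1" using Ap by (rule ln_le_minus_one)
  hence lnA: "ln (A W P b y) \<le> b * (lg W P y + b * L^2)" using Aub by (simp add: algebra_simps power2_eq_square)
  have "(1/b) * ln (A W P b y) \<le> (1/b) * (b * (lg W P y + b * L^2))"
    using lnA b by (intro mult_left_mono) auto
  hence "(1/b) * ln (A W P b y) \<le> lg W P y + b * L^2" using b by simp
  hence "A W P b y powr (1/b) \<le> exp (lg W P y + b * L^2)" using Ap by (simp add: powr_def)
  thus ?thesis by (simp add: L_def exp_add mult.commute)
qed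

lemma A_nYp_bound:
  fixes W :: "'x::finite \<Rightarrow> 'y::finite \<Rightarrow> real"
  assumes ch: "is_channel W" and P: "is_dist P" and y: "y \<notin> Yp W P" and b: "0 < b"
  shows "A W P b y powr (1/b) \<le> b * kk W P y"
proof -
  have "A W P b y \<le> cc W P y" unfolding A_def cc_def
  proof (intro sum_mono)
    fix x show "P x * W x y powr b \<le> (if W x y > 0 then P x else 0)"
    proof (cases "W x y > 0")
      case True
      have "W x y powr b \<le> 1" using ch_le1[OF ch, of x y] True b by (intro powr_le1) auto
      thus ?thesis using True dist_nonneg[OF P, of x] by (simp add: mult_left_le)
    next
      case False hence "W x y = 0" using ch_nonneg[OF ch, of x y] by simp
      thus ?thesis by simp
    qed
  qed
  hence "A W P b y powr (1/b) \<le> cc W P y powr (1/b)" using A_nonneg[OF P] b by (intro powr_mono2) auto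
  also have "\<dots> \<le> b * kk W P y" unfolding kk_def using cc_bounds[OF ch P y] b by (intro pow_small) auto
  finally show ?thesis .
qed

lemma TT_upper:
  fixes W :: "'x::finite \<Rightarrow> 'y::finite \<Rightarrow> real"
  assumes ch: "is_channel W" and P: "is_dist P" and b: "0 < b" "b * LL W \<le> 1"
  shows "TT W P b \<le> exp (b * LL W ^ 2) * S0 W P + b * KP W P"
proof -
  have "TT W P b \<le> (\<Sum>y\<in>UNIV. if y \<in> Yp W P then exp (b * LL W ^ 2) * exp (lg W P y) else b * kk W P y)"
    unfolding TT_def using A_Yp_bound[OF ch P _ b] A_nYp_bound[OF ch P _ b(1)] by (intro sum_mono) auto
  also have "\<dots> = (\<Sum>y\<in>UNIV. exp (b * LL W ^ 2) * (if y \<in> Yp W P then exp (lg W P y) else 0) + b * (if y \<in> Yp W P then 0 else kk W P y))"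
    by (intro sum.cong refl) auto
  also have "\<dots> = exp (b * LL W ^ 2) * S0 W P + b * KP W P"
    unfolding sum.distrib S0_alt KP_def sum_distrib_left[symmetric] ..
  finally show ?thesis .
qed



definition BB :: "('x::finite \<Rightarrow> 'y::finite \<Rightarrow> real) \<Rightarrow> real" where
  "BB W = 2 * LL W + ln (real CARD('y)) + 1"

lemma sum_lin3:
  fixes f g h :: "'a \<Rightarrow> real" and c d :: real
  shows "(\<Sum>i\<in>I. f i + d * g i + c * h i) = (\<Sum>i\<in>I. f i) + d * (\<Sum>i\<in>I. g i) + c * (\<Sum>i\<in>I. h i)"
  by (simp only: sum.distrib sum_distrib_left)

lemma sumZ:
  fixes W :: "'x::finite \<Rightarrow> 'y::finite \<Rightarrow> real"
  assumes P: "is_dist P"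
  shows "(\<Sum>y\<in>UNIV. \<Sum>x\<in>UNIV. P x * Q y * (ln (Q y) - ln (W x y))) = (\<Sum>y\<in>UNIV. Q y * (ln (Q y) - lg W P y))"
proof (rule sum.cong[OF refl])
  fix y
  have "(\<Sum>x\<in>UNIV. P x * Q y * (ln (Q y) - ln (W x y))) = (\<Sum>x\<in>UNIV. Q y * ln (Q y) * P x - Q y * (P x * ln (W x y)))"
    by (rule sum.cong) (auto simp: algebra_simps)
  also have "\<dots> = Q y * ln (Q y) * (\<Sum>x\<in>UNIV. P x) - Q y * (\<Sum>x\<in>UNIV. P x * ln (W x y))"
    by (simp add: sum_subtractf sum_distrib_left)
  finally show "(\<Sum>x\<in>UNIV. P x * Q y * (ln (Q y) - ln (W x y))) = Q y * (ln (Q y) - lg W P y)"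
    using dist_sum[OF P] by (simp add: lg_def algebra_simps)
qed

lemma ac_pair:
  assumes P: "is_dist P" and Q: "is_dist Q" and ac: "\<And>x y. P x > 0 \<Longrightarrow> Q y > 0 \<Longrightarrow> W x y > 0"
  shows "\<forall>a. prod_dist P Q a > 0 \<longrightarrow> joint P W a > 0"
proof (intro allI impI)
  fix a assume "prod_dist P Q a > 0"
  then obtain x y where a: "a = (x,y)" "P x * Q y > 0" by (cases a) (auto simp: Defs.prod_dist_def)
  hence "P x > 0" "Q y > 0" using dist_nonneg[OF P, of x] dist_nonneg[OF Q, of y] by (auto simp: zero_less_mult_iff)
  thus "joint P W a > 0" using ac a by (simp add: joint_def)
qed

lemma sumZ_Qs:
  fixes W :: "'x::finite \<Rightarrow> 'y::finite \<Rightarrow> real"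
  assumes ch: "is_channel W" and P: "is_dist P" and ne: "Yp W P \<noteq> {}"
  shows "(\<Sum>y\<in>UNIV. \<Sum>x\<in>UNIV. P x * Qs W P y * (ln (Qs W P y) - ln (W x y))) = - ln (S0 W P)"
proof -
  have ac: "\<And>x y. P x > 0 \<Longrightarrow> Qs W P y > 0 \<Longrightarrow> W x y > 0"
    by (auto simp: Qs_def Yp_def split: if_splits)
  have "ereal (\<Sum>y\<in>UNIV. Qs W P y * (ln (Qs W P y) - lg W P y)) = ereal (- ln (S0 W P))"
    using KL_formula[OF P Qs_dist[OF ch P ne] ac] KL_Qs[OF ch P ne] by simp
  thus ?thesis unfolding sumZ[OF P] by simp
qed

lemma lnQs_bounds:
  fixes W :: "'x::finite \<Rightarrow> 'y::finite \<Rightarrow> real"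
  assumes ch: "is_channel W" and P: "is_dist P" and ne: "Yp W P \<noteq> {}" and y: "y \<in> Yp W P"
  shows "0 < Qs W P y" "- LL W - ln (real CARD('y)) \<le> ln (Qs W P y)" "ln (Qs W P y) \<le> LL W"
proof -
  have S: "wmin W \<le> S0 W P" "S0 W P \<le> real CARD('y)" using S0_bounds[OF ch P ne] by auto
  have w: "0 < wmin W" using wmin[OF ch] by simp
  have Sp: "0 < S0 W P" using S w by simp
  have l1: "- LL W \<le> ln (S0 W P)" unfolding LL_def using S w by simp
  have l2: "ln (S0 W P) \<le> ln (real CARD('y))" using S Sp by simp
  have g: "- LL W \<le> lg W P y" "lg W P y \<le> 0" using lg_bounds[OF ch P y] by (auto simp: LL_def)
  have q: "Qs W P y = exp (lg W P y) / S0 W P" using y by (simp add: Qs_def)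
  show "0 < Qs W P y" using q Sp by simp
  have "ln (Qs W P y) = lg W P y - ln (S0 W P)" using q Sp by (simp add: ln_div)
  thus "- LL W - ln (real CARD('y)) \<le> ln (Qs W P y)" "ln (Qs W P y) \<le> LL W" using l1 l2 g by linarith+
qed

lemma renyi_Qs_upper:
  fixes W :: "'x::finite \<Rightarrow> 'y::finite \<Rightarrow> real"
  assumes ch: "is_channel W" and P: "is_dist P" and ne: "Yp W P \<noteq> {}"
    and a: "1 < \<alpha>" "(\<alpha> - 1) * BB W \<le> 1"
  shows "renyi \<alpha> (prod_dist P (Qs W P)) (joint P W) \<le> ereal (- ln (S0 W P) + (\<alpha> - 1) * BB W ^ 2)"
proof -
  define Q where "Q = Qs W P"
  have Qd: "is_dist Q" unfolding Q_def by (rule Qs_dist[OF ch P ne])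
  define d where "d = \<alpha> - 1"
  have d: "0 < d" "d * BB W \<le> 1" using a by (auto simp: d_def)
  define B where "B = BB W"
  have L0: "0 \<le> LL W" by (rule LL_nonneg[OF ch])
  have card1: "0 \<le> ln (real CARD('y))" by simp
  have QY: "Q y > 0 \<Longrightarrow> y \<in> Yp W P" for y by (auto simp: Q_def Qs_def split: if_splits)
  have ac: "\<And>x y. P x > 0 \<Longrightarrow> Q y > 0 \<Longrightarrow> W x y > 0" using QY by (auto simp: Yp_def)
  define Z where "Z x y = ln (Q y) - ln (W x y)" for x y
  define s where "s = (\<Sum>a\<in>{a. prod_dist P Q a > 0}. prod_dist P Q a powr \<alpha> * joint P W a powr (1 - \<alpha>))"
  have tm: "P x * (Q y powr \<alpha> * W x y powr (1 - \<alpha>)) = P x * Q y * exp (d * Z x y)" for x y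
  proof (cases "P x = 0 \<or> Q y = 0")
    case False
    hence px: "P x > 0" and qy: "Q y > 0" using dist_nonneg[OF P, of x] dist_nonneg[OF Qd, of y] by auto
    have w: "W x y > 0" using ac px qy by blast
    have "Q y powr \<alpha> * W x y powr (1 - \<alpha>) = exp (\<alpha> * ln (Q y) + (1 - \<alpha>) * ln (W x y))"
      using qy w by (simp add: powr_def exp_add)
    also have "\<alpha> * ln (Q y) + (1 - \<alpha>) * ln (W x y) = ln (Q y) + d * Z x y"
      by (simp add: d_def Z_def algebra_simps)
    also have "exp (ln (Q y) + d * Z x y) = Q y * exp (d * Z x y)" using qy by (simp add: exp_add)
    finally show ?thesis by simp
  qed auto
  have s2: "s = (\<Sum>y\<in>UNIV. \<Sum>x\<in>UNIV. P x * Q y * exp (d * Z x y))"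
  proof -
    have "s = (\<Sum>y\<in>UNIV. Q y powr \<alpha> * A W P (1 - \<alpha>) y)" unfolding s_def by (rule renyi_channel_sum[OF P Qd])
    also have "\<dots> = (\<Sum>y\<in>UNIV. \<Sum>x\<in>UNIV. P x * (Q y powr \<alpha> * W x y powr (1 - \<alpha>)))"
      unfolding A_def sum_distrib_left by (intro sum.cong refl) (simp add: algebra_simps)
    finally show ?thesis unfolding tm .
  qed
  have tb: "P x * Q y * exp (d * Z x y) \<le> P x * Q y * (1 + d * Z x y + d^2 * B^2)" for x y
  proof (cases "P x = 0 \<or> Q y = 0")
    case False
    hence px: "P x > 0" and qy: "Q y > 0" using dist_nonneg[OF P, of x] dist_nonneg[OF Qd, of y] by auto
    have w: "W x y > 0" using ac px qy by blast
    have lq: "- LL W - ln (real CARD('y)) \<le> ln (Q y)" "ln (Q y) \<le> LL W"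
      using lnQs_bounds[OF ch P ne QY[OF qy]] by (auto simp: Q_def)
    have lw: "- LL W \<le> ln (W x y)" "ln (W x y) \<le> 0" using lnW_bounds[OF ch w] by auto
    have zb: "\<bar>Z x y\<bar> \<le> B" unfolding Z_def B_def BB_def using lq lw L0 card1 by linarith
    have "\<bar>d * Z x y\<bar> \<le> d * B" using zb d by (simp add: abs_mult mult_left_mono)
    hence abs1: "\<bar>d * Z x y\<bar> \<le> d * B" .
    hence abs2: "\<bar>d * Z x y\<bar> \<le> 1" using d by (simp add: B_def)
    have B0: "0 \<le> B" using zb by linarith
    have sq: "(d * Z x y)^2 \<le> (d * B)^2"
      using abs1 B0 d abs_le_square_iff[of "d * Z x y" "d * B"] by simp
    have "exp (d * Z x y) \<le> 1 + d * Z x y + (d * Z x y)^2" by (rule exp_quad_bound[OF abs2])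
    also have "\<dots> \<le> 1 + d * Z x y + d^2 * B^2" using sq by (simp add: power_mult_distrib)
    finally show ?thesis using px qy by (intro mult_left_mono) auto
  qed auto
  have "s \<le> (\<Sum>y\<in>UNIV. \<Sum>x\<in>UNIV. P x * Q y * (1 + d * Z x y + d^2 * B^2))"
    unfolding s2 by (intro sum_mono tb)
  also have "\<dots> = (\<Sum>y\<in>UNIV. \<Sum>x\<in>UNIV. P x * Q y + d * (P x * Q y * Z x y) + d^2 * B^2 * (P x * Q y))"
    by (intro sum.cong refl) (simp add: algebra_simps)
  also have "\<dots> = (\<Sum>y\<in>UNIV. \<Sum>x\<in>UNIV. P x * Q y) + d * (\<Sum>y\<in>UNIV. \<Sum>x\<in>UNIV. P x * Q y * Z x y)
      + d^2 * B^2 * (\<Sum>y\<in>UNIV. \<Sum>x\<in>UNIV. P x * Q y)"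
    unfolding sum_lin3 ..
  also have "(\<Sum>y\<in>UNIV. \<Sum>x\<in>UNIV. P x * Q y) = 1"
  proof -
    have "(\<Sum>y\<in>UNIV. \<Sum>x\<in>UNIV. P x * Q y) = (\<Sum>y\<in>UNIV. (\<Sum>x\<in>UNIV. P x) * Q y)"
      by (simp add: sum_distrib_right)
    thus ?thesis using dist_sum[OF P] dist_sum[OF Qd] by simp
  qed
  also have "(\<Sum>y\<in>UNIV. \<Sum>x\<in>UNIV. P x * Q y * Z x y) = - ln (S0 W P)"
    unfolding Z_def Q_def by (rule sumZ_Qs[OF ch P ne])
  finally have sub: "s \<le> 1 + d * (- ln (S0 W P)) + d^2 * B^2" by simp
  obtain x0 where x0: "P x0 > 0" using dist_pos[OF P] by blast
  obtain y0 where y0: "Q y0 > 0" using dist_pos[OF Qd] by blast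
  have nn: "0 \<le> P x * Q y * exp (d * Z x y)" for x y
    using dist_nonneg[OF P, of x] dist_nonneg[OF Qd, of y] by simp
  have "0 < P x0 * Q y0 * exp (d * Z x0 y0)" using x0 y0 by simp
  also have "\<dots> \<le> (\<Sum>x\<in>UNIV. P x * Q y0 * exp (d * Z x y0))" by (rule member_le_sum) (auto simp: nn)
  also have "\<dots> \<le> s" unfolding s2 by (rule member_le_sum) (auto intro: sum_nonneg nn)
  finally have sp: "0 < s" .
  have "ln s \<le> s - 1" using sp by (rule ln_le_minus_one)
  hence "ln s \<le> (- ln (S0 W P) + d * B^2) * d" using sub by (simp add: algebra_simps power2_eq_square)
  hence "ln s / d \<le> - ln (S0 W P) + d * B^2" using d by (simp add: pos_divide_le_eq)
  moreover have "renyi \<alpha> (prod_dist P Q) (joint P W) = ereal (ln s / (\<alpha> - 1))"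
    using a ac_pair[OF P Qd ac] unfolding renyi_def Let_def s_def by simp
  ultimately show ?thesis by (simp add: Q_def d_def B_def)
qed



lemma U_eq: "U W = (SUP P\<in>{P. is_dist P}. fP W P)" unfolding U_def fP_def ..

lemma unif_dist: "is_dist (\<lambda>_::'a::finite. 1 / real CARD('a))" unfolding is_dist_def by simp

lemma U_renyi_lower:
  fixes W :: "'x::finite \<Rightarrow> 'y::finite \<Rightarrow> real"
  assumes ch: "is_channel W" and P: "is_dist P" and a: "0 < \<alpha>" "\<alpha> < 1"
  shows "ereal (- ln (TT W P (1 - \<alpha>))) \<le> U_renyi \<alpha> W"
proof -
  have "ereal (- ln (TT W P (1 - \<alpha>))) \<le> (INF Q\<in>{Q. is_dist Q}. renyi \<alpha> (prod_dist P Q) (joint P W))"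
    by (rule INF_greatest) (auto intro: renyi_lower_left[OF ch P _ a])
  also have "\<dots> \<le> U_renyi \<alpha> W" unfolding U_renyi_def using P by (intro SUP_upper) auto
  finally show ?thesis .
qed

lemma U_renyi_upper:
  fixes W :: "'x::finite \<Rightarrow> 'y::finite \<Rightarrow> real"
  assumes ch: "is_channel W" and ne: "\<And>P. is_dist P \<Longrightarrow> Yp W P \<noteq> {}"
    and a: "1 < \<alpha>" "(\<alpha> - 1) * BB W \<le> 1" and u: "U W \<le> ereal u"
  shows "U_renyi \<alpha> W \<le> ereal (u + (\<alpha> - 1) * BB W ^ 2)"
  unfolding U_renyi_def
proof (rule SUP_least)
  fix P :: "'x \<Rightarrow> real" assume "P \<in> {P. is_dist P}"
  hence P: "is_dist P" by simp
  have "fP W P \<le> U W" unfolding U_eq using P by (intro SUP_upper) auto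
  hence "ereal (- ln (S0 W P)) \<le> U W" using fP_val[OF ch P] ne[OF P] by simp
  hence "ereal (- ln (S0 W P)) \<le> ereal u" using u by (rule order.trans)
  hence le: "- ln (S0 W P) \<le> u" by simp
  have "(INF Q\<in>{Q. is_dist Q}. renyi \<alpha> (prod_dist P Q) (joint P W)) \<le> renyi \<alpha> (prod_dist P (Qs W P)) (joint P W)"
    using Qs_dist[OF ch P ne[OF P]] by (intro INF_lower) auto
  also have "\<dots> \<le> ereal (- ln (S0 W P) + (\<alpha> - 1) * BB W ^ 2)" by (rule renyi_Qs_upper[OF ch P ne[OF P] a])
  also have "\<dots> \<le> ereal (u + (\<alpha> - 1) * BB W ^ 2)" using le by simp
  finally show "(INF Q\<in>{Q. is_dist Q}. renyi \<alpha> (prod_dist P Q) (joint P W)) \<le> ereal (u + (\<alpha> - 1) * BB W ^ 2)" .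
qed

lemma left_limit:
  fixes W :: "'x::finite \<Rightarrow> 'y::finite \<Rightarrow> real"
  assumes ch: "is_channel W"
  shows "((\<lambda>\<alpha>. U_renyi \<alpha> W) \<longlongrightarrow> U W) (at_left 1)"
proof (rule order_tendstoI)
  define m where "m = max 0 (1 - 1 / (LL W + 1))"
  have L0: "0 \<le> LL W" by (rule LL_nonneg[OF ch])
  have m1: "m < 1" unfolding m_def using L0 by auto
  have ev: "eventually (\<lambda>\<alpha>. \<alpha> \<in> {m<..<1}) (at_left 1)" by (rule eventually_at_left_real[OF m1])
  have good: "0 < \<alpha> \<and> \<alpha> < 1 \<and> 0 < 1 - \<alpha> \<and> (1 - \<alpha>) * LL W \<le> 1" if "\<alpha> \<in> {m<..<1}" for \<alpha>
  proof -
    have a: "m < \<alpha>" "\<alpha> < 1" using that by auto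
    have "0 < \<alpha>" using a m_def by linarith
    moreover have "1 - \<alpha> < 1 / (LL W + 1)" using a unfolding m_def by linarith
    hence "(1 - \<alpha>) * (LL W + 1) \<le> 1" using L0 by (simp add: field_simps)
    hence "(1 - \<alpha>) * LL W \<le> 1" using a by (simp add: algebra_simps)
    ultimately show ?thesis using a by simp
  qed
  fix a :: ereal assume aU: "a < U W"
  show "eventually (\<lambda>\<alpha>. a < U_renyi \<alpha> W) (at_left 1)"
  proof (cases a)
    case MInf
    show ?thesis using ev
    proof (rule eventually_mono)
      fix \<alpha> assume "\<alpha> \<in> {m<..<1}"
      hence g: "0 < \<alpha>" "\<alpha> < 1" using good by auto
      have "-\<infinity> < ereal (- ln (TT W (\<lambda>_. 1 / real CARD('x)) (1 - \<alpha>)))" by simp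
      also have "\<dots> \<le> U_renyi \<alpha> W" by (rule U_renyi_lower[OF ch unif_dist g])
      finally show "a < U_renyi \<alpha> W" using MInf by simp
    qed
  next
    case PInf thus ?thesis using aU by simp
  next
    case (real r)
    obtain P where P: "is_dist P" and rP: "ereal r < fP W P" using aU real unfolding U_eq less_SUP_iff by auto
    have S0lt: "S0 W P < exp (- r)"
    proof (cases "Yp W P = {}")
      case True thus ?thesis by (simp add: S0_def)
    next
      case False
      hence "r < - ln (S0 W P)" using rP fP_val[OF ch P] by simp
      hence "ln (S0 W P) < - r" by simp
      moreover have "0 < S0 W P" using S0_bounds(1)[OF ch P False] wmin(1)[OF ch] by simp
      ultimately show ?thesis by (metis exp_less_mono exp_ln)
    qed
    define Bd where "Bd \<alpha> = exp ((1 - \<alpha>) * LL W ^ 2) * S0 W P + (1 - \<alpha>) * KP W P" for \<alpha>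
    have "(Bd \<longlongrightarrow> exp ((1 - 1) * LL W ^ 2) * S0 W P + (1 - 1) * KP W P) (at_left 1)"
      unfolding Bd_def by (intro tendsto_intros)
    hence "(Bd \<longlongrightarrow> S0 W P) (at_left 1)" by simp
    hence ev2: "eventually (\<lambda>\<alpha>. Bd \<alpha> < exp (- r)) (at_left 1)" using S0lt by (rule order_tendstoD(2))
    show ?thesis using eventually_conj[OF ev ev2]
    proof (rule eventually_mono)
      fix \<alpha> assume h: "\<alpha> \<in> {m<..<1} \<and> Bd \<alpha> < exp (- r)"
      hence g: "0 < \<alpha>" "\<alpha> < 1" "0 < 1 - \<alpha>" "(1 - \<alpha>) * LL W \<le> 1" using good by auto
      have "TT W P (1 - \<alpha>) \<le> Bd \<alpha>" unfolding Bd_def by (rule TT_upper[OF ch P g(3,4)])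
      hence Tlt: "TT W P (1 - \<alpha>) < exp (- r)" using h by simp
      have Tp: "0 < TT W P (1 - \<alpha>)" by (rule TT_pos[OF ch P g(3)])
      have "ln (TT W P (1 - \<alpha>)) < - r" using Tlt Tp by (metis exp_less_cancel_iff exp_ln)
      hence "ereal r < ereal (- ln (TT W P (1 - \<alpha>)))" by simp
      also have "\<dots> \<le> U_renyi \<alpha> W" by (rule U_renyi_lower[OF ch P g(1,2)])
      finally show "a < U_renyi \<alpha> W" using real by simp
    qed
  qed
next
  fix b :: ereal assume "U W < b"
  show "eventually (\<lambda>\<alpha>. U_renyi \<alpha> W < b) (at_left 1)"
    using eventually_at_left_real[of 0 1]
  proof (rule eventually_mono, simp_all)
    fix \<alpha> :: real assume "0 < \<alpha> \<and> \<alpha> < 1"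
    hence "U_renyi \<alpha> W \<le> U W" by (intro U_renyi_le_U) auto
    thus "U_renyi \<alpha> W < b" using \<open>U W < b\<close> by simp
  qed
qed

lemma right_limit:
  fixes W :: "'x::finite \<Rightarrow> 'y::finite \<Rightarrow> real"
  assumes ch: "is_channel W"
  shows "((\<lambda>\<alpha>. U_renyi \<alpha> W) \<longlongrightarrow> U W) (at_right 1)"
proof (rule order_tendstoI)
  fix a :: ereal assume "a < U W"
  show "eventually (\<lambda>\<alpha>. a < U_renyi \<alpha> W) (at_right 1)"
    using eventually_at_right_real[of 1 2]
  proof (rule eventually_mono, simp_all)
    fix \<alpha> :: real assume "1 < \<alpha> \<and> \<alpha> < 2"
    hence "U W \<le> U_renyi \<alpha> W" by (intro U_le_U_renyi) auto
    thus "a < U_renyi \<alpha> W" using \<open>a < U W\<close> by simp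
  qed
next
  fix b :: ereal assume Ub: "U W < b"
  have ne: "Yp W P \<noteq> {}" if P: "is_dist P" for P :: "'x \<Rightarrow> real"
  proof
    assume "Yp W P = {}"
    hence "fP W P = \<infinity>" using fP_val[OF ch P] by simp
    moreover have "fP W P \<le> U W" unfolding U_eq using P by (intro SUP_upper) auto
    ultimately show False using Ub by simp
  qed
  define P0 where "P0 = (\<lambda>_::'x. 1 / real CARD('x))"
  have P0: "is_dist P0" unfolding P0_def by (rule unif_dist)
  have "fP W P0 \<le> U W" unfolding U_eq using P0 by (intro SUP_upper) auto
  hence "ereal (- ln (S0 W P0)) \<le> U W" using fP_val[OF ch P0] ne[OF P0] by simp
  moreover have "U W \<noteq> \<infinity>" using Ub by auto
  ultimately obtain u where u: "U W = ereal u" by (cases "U W") auto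
  define B where "B = BB W"
  have B1: "1 \<le> B" unfolding B_def BB_def using LL_nonneg[OF ch] by simp
  have ev: "eventually (\<lambda>\<alpha>. \<alpha> \<in> {1<..<1 + 1 / B}) (at_right 1)"
    by (rule eventually_at_right_real) (use B1 in simp)
  have bound: "U_renyi \<alpha> W \<le> ereal (u + (\<alpha> - 1) * B ^ 2)" if "\<alpha> \<in> {1<..<1 + 1 / B}" for \<alpha>
  proof -
    have a1: "1 < \<alpha>" using that by simp
    have "\<alpha> - 1 < 1 / B" using that by simp
    hence "(\<alpha> - 1) * B \<le> 1" using B1 by (simp add: field_simps)
    thus ?thesis unfolding B_def using U_renyi_upper[OF ch ne a1 _ ] u by (simp add: B_def)
  qed
  show "eventually (\<lambda>\<alpha>. U_renyi \<alpha> W < b) (at_right 1)"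
  proof (cases b)
    case PInf
    show ?thesis using ev by (rule eventually_mono) (use bound PInf in force)
  next
    case MInf thus ?thesis using Ub by simp
  next
    case (real r)
    have ur: "u < r" using Ub u real by simp
    have "((\<lambda>\<alpha>. u + (\<alpha> - 1) * B ^ 2) \<longlongrightarrow> u + (1 - 1) * B ^ 2) (at_right 1)" by (intro tendsto_intros)
    hence "((\<lambda>\<alpha>. u + (\<alpha> - 1) * B ^ 2) \<longlongrightarrow> u) (at_right 1)" by simp
    hence ev2: "eventually (\<lambda>\<alpha>. u + (\<alpha> - 1) * B ^ 2 < r) (at_right 1)" using ur by (rule order_tendstoD(2))
    show ?thesis using eventually_conj[OF ev ev2]
    proof (rule eventually_mono)
      fix \<alpha> assume h: "\<alpha> \<in> {1<..<1 + 1 / B} \<and> u + (\<alpha> - 1) * B ^ 2 < r"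
      hence "U_renyi \<alpha> W \<le> ereal (u + (\<alpha> - 1) * B ^ 2)" using bound by blast
      also have "\<dots> < ereal r" using h by simp
      finally show "U_renyi \<alpha> W < b" using real by simp
    qed
  qed
qed

theorem mainTheorem14:
  fixes W :: "'x::finite \<Rightarrow> 'y::finite \<Rightarrow> real"
  assumes "is_channel W"
  shows "((\<lambda>\<alpha>. U_renyi \<alpha> W) \<longlongrightarrow> U W) (at_left 1)
     \<and> ((\<lambda>\<alpha>. U_renyi \<alpha> W) \<longlongrightarrow> U W) (at_right 1)"
  using left_limit[OF assms] right_limit[OF assms] by simp


end
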